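(* Let $N$ and $m=m(N)$ be positive integers such that $m = \Theta(N)$ as $N \rightarrow \infty$ and $\frac{m}{N} < \frac{1}{100}$. Place each of $m$ balls independently and uniformly at random into one of $N$ bins, and let $Z$ be the number of bins containing at least $2$ balls. Then, for $N$ large enough, \[ \mathrm{Var}[Z] = h\left(\frac{m}{N}\right)N +O(1) \geq \frac{1}{3}\left(\frac{m}{N}\right)^2 N, \] as $N \rightarrow \infty$, where $h(x) \coloneqq (1+x)e^{-x} -((1+x)^2+x^3) e^{-2x}$. *)

theory Defs
  imports "HOL-Probability.Probability" "HOL-Library.Landau_Symbols"
begin

definition balls_bins :: "nat \<Rightarrow> nat \<Rightarrow> (nat \<Rightarrow> nat) pmf" where
  "balls_bins m N = pmf_of_set (PiE {..<m} (\<lambda>_. {..<N}))"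

definition bins_ge2 :: "nat \<Rightarrow> nat \<Rightarrow> (nat \<Rightarrow> nat) \<Rightarrow> real" where
  "bins_ge2 m N f = real (card {j. j < N \<and> 2 \<le> card {i. i < m \<and> f i = j}})"

definition hfun :: "real \<Rightarrow> real" where
  "hfun x = (1 + x) * exp (- x) - ((1 + x)^2 + x^3) * exp (- 2 * x)"

end

theory Submission
  imports Defs
begin


definition cnt :: "nat \<Rightarrow> nat \<Rightarrow> (nat \<Rightarrow> nat) \<Rightarrow> nat" where
  "cnt m j f = card {i. i < m \<and> f i = j}"

abbreviation SS :: "nat \<Rightarrow> nat \<Rightarrow> (nat \<Rightarrow> nat) set" where
  "SS m N \<equiv> PiE {..<m} (\<lambda>_. {..<N})"

lemma cnt_upd:
  assumes "g \<in> SS m N"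
  shows "cnt (Suc m) j (g(m := y)) = cnt m j g + (if y = j then 1 else 0)"
proof -
  have "{i. i < Suc m \<and> (g(m := y)) i = j} = {i. i < m \<and> g i = j} \<union> (if y = j then {m} else {})"
    by (auto simp: less_Suc_eq)
  then show ?thesis unfolding cnt_def by (auto simp: card_insert_if)
qed

lemma SS_Suc: "SS (Suc m) N = (\<lambda>(y, g). g(m := y)) ` ({..<N} \<times> SS m N)"
  using PiE_insert_eq[of m "{..<m}" "\<lambda>_. {..<N}"] by (simp add: lessThan_Suc)

lemma count_rec2:
  assumes jk: "j < N" "k < N" "j \<noteq> k"
  shows "card {f \<in> SS (Suc m) N. Q (cnt (Suc m) j f) (cnt (Suc m) k f)} =
     card {f \<in> SS m N. Q (cnt m j f + 1) (cnt m k f)} + card {f \<in> SS m N. Q (cnt m j f) (cnt m k f + 1)}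
     + (N - 2) * card {f \<in> SS m N. Q (cnt m j f) (cnt m k f)}"
proof -
  let ?h = "\<lambda>(y, g). (g::nat\<Rightarrow>nat)(m := (y::nat))"
  let ?G = "\<lambda>y. {g \<in> SS m N. Q (cnt m j g + (if y = j then 1 else 0)) (cnt m k g + (if y = k then 1 else 0))}"
  have inj: "inj_on ?h ({..<N} \<times> SS m N)"
    using inj_combinator[of m "{..<m}" "\<lambda>_. {..<N}"] by simp
  have eq: "{f \<in> SS (Suc m) N. Q (cnt (Suc m) j f) (cnt (Suc m) k f)} = ?h ` (SIGMA y:{..<N}. ?G y)"
  proof
    show "{f \<in> SS (Suc m) N. Q (cnt (Suc m) j f) (cnt (Suc m) k f)} \<subseteq> ?h ` (SIGMA y:{..<N}. ?G y)"
    proof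
      fix f assume "f \<in> {f \<in> SS (Suc m) N. Q (cnt (Suc m) j f) (cnt (Suc m) k f)}"
      then have f: "f \<in> SS (Suc m) N" "Q (cnt (Suc m) j f) (cnt (Suc m) k f)" by auto
      then obtain y g where yg: "y < N" "g \<in> SS m N" "f = g(m := y)" unfolding SS_Suc by auto
      then show "f \<in> ?h ` (SIGMA y:{..<N}. ?G y)"
        using f(2) by (auto simp: cnt_upd intro!: image_eqI[of _ _ "(y, g)"])
    qed
    show "?h ` (SIGMA y:{..<N}. ?G y) \<subseteq> {f \<in> SS (Suc m) N. Q (cnt (Suc m) j f) (cnt (Suc m) k f)}"
    proof
      fix f assume "f \<in> ?h ` (SIGMA y:{..<N}. ?G y)"
      then obtain y g where yg: "y < N" "g \<in> ?G y" "f = g(m := y)" by auto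
      then have "f \<in> SS (Suc m) N" unfolding SS_Suc by auto
      then show "f \<in> {f \<in> SS (Suc m) N. Q (cnt (Suc m) j f) (cnt (Suc m) k f)}"
        using yg by (auto simp: cnt_upd)
    qed
  qed
  have sub: "(SIGMA y:{..<N}. ?G y) \<subseteq> {..<N} \<times> SS m N" by auto
  have "card {f \<in> SS (Suc m) N. Q (cnt (Suc m) j f) (cnt (Suc m) k f)} = card (SIGMA y:{..<N}. ?G y)"
    unfolding eq by (rule card_image) (rule inj_on_subset[OF inj sub])
  also have "\<dots> = (\<Sum>y<N. card (?G y))"
    by (rule card_SigmaI) (auto intro: finite_subset[OF _ finite_PiE[of "{..<m}" "\<lambda>_. {..<N}"]])
  also have "(\<Sum>y<N. card (?G y)) = card (?G j) + (\<Sum>y\<in>{..<N}-{j}. card (?G y))"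
    by (rule sum.remove) (use jk in auto)
  also have "(\<Sum>y\<in>{..<N}-{j}. card (?G y)) = card (?G k) + (\<Sum>y\<in>{..<N}-{j}-{k}. card (?G y))"
    by (rule sum.remove) (use jk in auto)
  also have "(\<Sum>y\<in>{..<N}-{j}-{k}. card (?G y)) = (\<Sum>y\<in>{..<N}-{j}-{k}. card {f \<in> SS m N. Q (cnt m j f) (cnt m k f)})"
    by (rule sum.cong) auto
  also have "\<dots> = (N - 2) * card {f \<in> SS m N. Q (cnt m j f) (cnt m k f)}"
  proof -
    have "card ({..<N}-{j}-{k}) = N - 2" using jk by (simp add: card_Diff_singleton_if)
    then show ?thesis by simp
  qed
  also have "card (?G j) = card {f \<in> SS m N. Q (cnt m j f + 1) (cnt m k f)}" using jk by simp
  also have "card (?G k) = card {f \<in> SS m N. Q (cnt m j f) (cnt m k f + 1)}" using jk by simp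
  finally show ?thesis using jk by simp
qed

lemma cnt0: "cnt 0 j f = 0" by (simp add: cnt_def)

lemma N2: "j < N \<Longrightarrow> k < N \<Longrightarrow> j \<noteq> k \<Longrightarrow> real (N - 2) = real N - 2"
  by (subst of_nat_diff) auto

lemma D00:
  assumes jk: "j < N" "k < N" "j \<noteq> k"
  shows "real (card {f \<in> SS m N. cnt m j f = 0 \<and> cnt m k f = 0}) = (real N - 2)^m"
proof (induction m)
  case 0 show ?case by (simp add: cnt0)
next
  case (Suc m)
  have "card {f \<in> SS (Suc m) N. cnt (Suc m) j f = 0 \<and> cnt (Suc m) k f = 0}
     = (N-2) * card {f \<in> SS m N. cnt m j f = 0 \<and> cnt m k f = 0}"
    using count_rec2[OF jk, where Q="\<lambda>a b. a = 0 \<and> b = 0" and m=m] by simp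
  then show ?case using Suc N2[OF jk] by simp
qed

lemma D10:
  assumes jk: "j < N" "k < N" "j \<noteq> k" and N3: "3 \<le> N"
  shows "real (card {f \<in> SS m N. cnt m j f \<le> 1 \<and> cnt m k f = 0}) = (real N - 2)^m * (1 + real m / (real N - 2))"
proof (induction m)
  case 0 show ?case by (simp add: cnt0)
next
  case (Suc m)
  have e: "{f \<in> SS m N. cnt m j f + 1 \<le> 1 \<and> cnt m k f = 0} = {f \<in> SS m N. cnt m j f = 0 \<and> cnt m k f = 0}"
    by auto
  have "card {f \<in> SS (Suc m) N. cnt (Suc m) j f \<le> 1 \<and> cnt (Suc m) k f = 0}
     = card {f \<in> SS m N. cnt m j f = 0 \<and> cnt m k f = 0} + (N-2) * card {f \<in> SS m N. cnt m j f \<le> 1 \<and> cnt m k f = 0}"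
    using count_rec2[OF jk, where Q="\<lambda>a b. a \<le> 1 \<and> b = 0" and m=m] e by simp
  then have "real (card {f \<in> SS (Suc m) N. cnt (Suc m) j f \<le> 1 \<and> cnt (Suc m) k f = 0})
     = (real N - 2)^m + (real N - 2) * ((real N - 2)^m * (1 + real m / (real N - 2)))"
    using Suc D00[OF jk, of m] N2[OF jk] by simp
  also have "\<dots> = (real N - 2)^(Suc m) * (1 + real (Suc m) / (real N - 2))"
    using N3 by (simp add: field_simps)
  finally show ?case .
qed

lemma alg11:
  fixes q :: real
  assumes "q > 0"
  shows "2 * (q^m * (1 + real m / q)) + q * (q^m * (1 + 2 * real m / q + real m * (real m - 1) / q^2)) =
    q^(Suc m) * (1 + 2 * real (Suc m) / q + real (Suc m) * (real (Suc m) - 1) / q^2)"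
  using assms by (simp add: field_simps power2_eq_square)

lemma D11:
  assumes jk: "j < N" "k < N" "j \<noteq> k" and N3: "3 \<le> N"
  shows "real (card {f \<in> SS m N. cnt m j f \<le> 1 \<and> cnt m k f \<le> 1}) =
    (real N - 2)^m * (1 + 2 * real m / (real N - 2) + real m * (real m - 1) / (real N - 2)^2)"
proof (induction m)
  case 0 show ?case by (simp add: cnt0)
next
  case (Suc m)
  have e1: "{f \<in> SS m N. cnt m j f + 1 \<le> 1 \<and> cnt m k f \<le> 1} = {f \<in> SS m N. cnt m k f \<le> 1 \<and> cnt m j f = 0}"
    by auto
  have e2: "{f \<in> SS m N. cnt m j f \<le> 1 \<and> cnt m k f + 1 \<le> 1} = {f \<in> SS m N. cnt m j f \<le> 1 \<and> cnt m k f = 0}"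
    by auto
  have jk': "k < N" "j < N" "k \<noteq> j" using jk by auto
  have "card {f \<in> SS (Suc m) N. cnt (Suc m) j f \<le> 1 \<and> cnt (Suc m) k f \<le> 1}
     = card {f \<in> SS m N. cnt m k f \<le> 1 \<and> cnt m j f = 0} + card {f \<in> SS m N. cnt m j f \<le> 1 \<and> cnt m k f = 0}
       + (N-2) * card {f \<in> SS m N. cnt m j f \<le> 1 \<and> cnt m k f \<le> 1}"
    using count_rec2[OF jk, where Q="\<lambda>a b. a \<le> 1 \<and> b \<le> 1" and m=m] e1 e2 by simp
  then have "real (card {f \<in> SS (Suc m) N. cnt (Suc m) j f \<le> 1 \<and> cnt (Suc m) k f \<le> 1})
     = 2 * ((real N - 2)^m * (1 + real m / (real N - 2))) + (real N - 2) * ((real N - 2)^m * (1 + 2 * real m / (real N - 2) + real m * (real m - 1) / (real N - 2)^2))"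
    using Suc D10[OF jk N3, of m] D10[OF jk' N3, of m] N2[OF jk] by simp
  also have "\<dots> = (real N - 2)^(Suc m) * (1 + 2 * real (Suc m) / (real N - 2) + real (Suc m) * (real (Suc m) - 1) / (real N - 2)^2)"
    by (rule alg11) (use N3 in simp)
  finally show ?case .
qed

lemma E0:
  assumes jk: "j < N" "k < N" "j \<noteq> k"
  shows "real (card {f \<in> SS m N. cnt m j f = 0}) = (real N - 1)^m"
proof (induction m)
  case 0 show ?case by (simp add: cnt0)
next
  case (Suc m)
  have "card {f \<in> SS (Suc m) N. cnt (Suc m) j f = 0}
     = card {f \<in> SS m N. cnt m j f = 0} + (N-2) * card {f \<in> SS m N. cnt m j f = 0}"
    using count_rec2[OF jk, where Q="\<lambda>a b. a = 0" and m=m] by simp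
  then show ?case using Suc N2[OF jk] by (simp add: algebra_simps)
qed

lemma E1:
  assumes jk: "j < N" "k < N" "j \<noteq> k" and N3: "3 \<le> N"
  shows "real (card {f \<in> SS m N. cnt m j f \<le> 1}) = (real N - 1)^m * (1 + real m / (real N - 1))"
proof (induction m)
  case 0 show ?case by (simp add: cnt0)
next
  case (Suc m)
  have e: "{f \<in> SS m N. cnt m j f + 1 \<le> 1} = {f \<in> SS m N. cnt m j f = 0}"
    by auto
  have "card {f \<in> SS (Suc m) N. cnt (Suc m) j f \<le> 1}
     = card {f \<in> SS m N. cnt m j f = 0} + card {f \<in> SS m N. cnt m j f \<le> 1} + (N-2) * card {f \<in> SS m N. cnt m j f \<le> 1}"
    using count_rec2[OF jk, where Q="\<lambda>a b. a \<le> 1" and m=m] e by simp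
  then have "real (card {f \<in> SS (Suc m) N. cnt (Suc m) j f \<le> 1})
     = (real N - 1)^m + (real N - 1) * real (card {f \<in> SS m N. cnt m j f \<le> 1})"
  proof -
    have "real (card {f \<in> SS (Suc m) N. cnt (Suc m) j f \<le> 1}) = real (card {f \<in> SS m N. cnt m j f = 0}) +
      real (card {f \<in> SS m N. cnt m j f \<le> 1}) + real (N - 2) * real (card {f \<in> SS m N. cnt m j f \<le> 1})"
      using \<open>card _ = _\<close> by simp
    then show ?thesis unfolding E0[OF jk] N2[OF jk] by (simp add: algebra_simps)
  qed
  also have "\<dots> = (real N - 1)^m + (real N - 1) * ((real N - 1)^m * (1 + real m / (real N - 1)))"
    by (simp only: Suc.IH)
  also have "\<dots> = (real N - 1)^(Suc m) * (1 + real (Suc m) / (real N - 1))"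
    using N3 by (simp add: field_simps)
  finally show ?case .
qed



lemma sum_ind_card:
  assumes "finite A"
  shows "(\<Sum>x\<in>A. if P x then 1 else 0 :: real) = real (card {x\<in>A. P x})"
  using assms by (simp add: sum.If_cases Int_def)

lemma sum_if_eq:
  assumes "j < N"
  shows "(\<Sum>k<N. if j = k then a else b) = a + (real N - 1) * (b::real)"
proof -
  have "(\<Sum>k<N. if j = k then a else b) = (if j = j then a else b) + (\<Sum>k\<in>{..<N}-{j}. if j = k then a else b)"
    by (rule sum.remove) (use assms in auto)
  also have "(\<Sum>k\<in>{..<N}-{j}. if j = k then a else b) = (\<Sum>k\<in>{..<N}-{j}. b)"
    by (rule sum.cong) auto
  also have "\<dots> = (real N - 1) * b" using assms by (simp add: of_nat_diff)
  finally show ?thesis by simp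
qed

definition Ind :: "nat \<Rightarrow> nat \<Rightarrow> (nat \<Rightarrow> nat) \<Rightarrow> real" where
  "Ind m j f = (if cnt m j f \<le> 1 then 1 else 0)"

lemma Z_sum: "bins_ge2 m N f = (\<Sum>j<N. 1 - Ind m j f)"
proof -
  have "{j. j < N \<and> 2 \<le> card {i. i < m \<and> f i = j}} = {j \<in> {..<N}. \<not> cnt m j f \<le> 1}"
    by (auto simp: cnt_def)
  then have "bins_ge2 m N f = (\<Sum>j<N. if \<not> cnt m j f \<le> 1 then 1 else 0)"
    unfolding bins_ge2_def by (simp only: sum_ind_card[symmetric] finite_lessThan)
  also have "\<dots> = (\<Sum>j<N. 1 - Ind m j f)"
    by (rule sum.cong) (auto simp: Ind_def)
  finally show ?thesis .
qed

definition e1v :: "nat \<Rightarrow> nat \<Rightarrow> real" where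
  "e1v m N = (real N - 1)^m * (1 + real m / (real N - 1))"
definition d11v :: "nat \<Rightarrow> nat \<Rightarrow> real" where
  "d11v m N = (real N - 2)^m * (1 + 2 * real m / (real N - 2) + real m * (real m - 1) / (real N - 2)^2)"

lemma sum_Ind:
  assumes "j < N" "3 \<le> N"
  shows "(\<Sum>f\<in>SS m N. Ind m j f) = e1v m N"
proof -
  define k where "k = (if j = 0 then 1 else (0::nat))"
  have jk: "j < N" "k < N" "j \<noteq> k" using assms by (auto simp: k_def)
  have "(\<Sum>f\<in>SS m N. Ind m j f) = real (card {f \<in> SS m N. cnt m j f \<le> 1})"
    unfolding Ind_def by (rule sum_ind_card) (simp add: finite_PiE)
  then show ?thesis using E1[OF jk assms(2)] by (simp add: e1v_def)
qed

lemma sum_Ind2: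
  assumes "j < N" "k < N" "3 \<le> N"
  shows "(\<Sum>f\<in>SS m N. Ind m j f * Ind m k f) = (if j = k then e1v m N else d11v m N)"
proof (cases "j = k")
  case True
  have "(\<Sum>f\<in>SS m N. Ind m j f * Ind m k f) = (\<Sum>f\<in>SS m N. Ind m j f)"
    by (rule sum.cong) (auto simp: Ind_def True)
  then show ?thesis using sum_Ind[OF assms(1,3), of m] True by simp
next
  case False
  have "(\<Sum>f\<in>SS m N. Ind m j f * Ind m k f) = (\<Sum>f\<in>SS m N. if cnt m j f \<le> 1 \<and> cnt m k f \<le> 1 then 1 else 0)"
    by (rule sum.cong) (auto simp: Ind_def)
  also have "\<dots> = real (card {f \<in> SS m N. cnt m j f \<le> 1 \<and> cnt m k f \<le> 1})"
    by (rule sum_ind_card) (simp add: finite_PiE)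
  also have "\<dots> = d11v m N" using D11[OF assms(1,2) False assms(3)] by (simp add: d11v_def)
  finally show ?thesis using False by simp
qed

lemma card_SS: "card (SS m N) = N ^ m"
  by (simp add: card_PiE)

lemma var_exact:
  assumes N3: "3 \<le> N"
  shows "measure_pmf.variance (balls_bins m N) (bins_ge2 m N) =
    real N * (e1v m N / real N ^ m) + real N * (real N - 1) * (d11v m N / real N ^ m)
    - (real N)^2 * (e1v m N / real N ^ m)^2"
proof -
  let ?S = "SS m N"
  let ?Z = "bins_ge2 m N"
  define nu where "nu = real N ^ m"
  have fin: "finite ?S" by (simp add: finite_PiE)
  have ne: "?S \<noteq> {}" using N3 by (auto simp: PiE_eq_empty_iff lessThan_empty_iff)
  have nu: "real (card ?S) = nu" by (simp add: card_SS nu_def)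
  have nupos: "nu > 0" using N3 by (simp add: nu_def)
  have setp: "set_pmf (balls_bins m N) = ?S" unfolding balls_bins_def using fin ne by simp
  have int: "integrable (measure_pmf (balls_bins m N)) g" for g :: "_ \<Rightarrow> real"
    by (rule integrable_measure_pmf_finite) (simp add: setp fin)
  have expt: "measure_pmf.expectation (balls_bins m N) g = sum g ?S / nu" for g :: "_ \<Rightarrow> real"
    unfolding balls_bins_def using fin ne nu by (simp add: integral_pmf_of_set)
  have s1: "(\<Sum>f\<in>?S. ?Z f) = real N * (nu - e1v m N)"
  proof -
    have "(\<Sum>f\<in>?S. ?Z f) = (\<Sum>f\<in>?S. \<Sum>j<N. 1 - Ind m j f)" by (simp add: Z_sum)
    also have "\<dots> = (\<Sum>j<N. \<Sum>f\<in>?S. 1 - Ind m j f)" by (rule sum.swap)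
    also have "\<dots> = (\<Sum>j<N. nu - e1v m N)"
      by (rule sum.cong) (use N3 nu in \<open>auto simp: sum_subtractf sum_Ind\<close>)
    finally show ?thesis by simp
  qed
  have s2: "(\<Sum>f\<in>?S. (?Z f)^2) = (real N)^2 * (nu - 2 * e1v m N) + real N * e1v m N + real N * (real N - 1) * d11v m N"
  proof -
    have "(\<Sum>f\<in>?S. (?Z f)^2) = (\<Sum>f\<in>?S. \<Sum>j<N. \<Sum>k<N. (1 - Ind m j f) * (1 - Ind m k f))"
      unfolding Z_sum power2_eq_square sum_product by simp
    also have "\<dots> = (\<Sum>j<N. \<Sum>f\<in>?S. \<Sum>k<N. (1 - Ind m j f) * (1 - Ind m k f))" by (rule sum.swap)
    also have "\<dots> = (\<Sum>j<N. \<Sum>k<N. \<Sum>f\<in>?S. (1 - Ind m j f) * (1 - Ind m k f))"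
      by (rule sum.cong, simp, rule sum.swap)
    also have "\<dots> = (\<Sum>j<N. \<Sum>k<N. nu - 2 * e1v m N + (if j = k then e1v m N else d11v m N))"
    proof (intro sum.cong refl)
      fix j k assume "j \<in> {..<N}" "k \<in> {..<N}"
      then have jk: "j < N" "k < N" by auto
      have "(\<Sum>f\<in>?S. (1 - Ind m j f) * (1 - Ind m k f)) =
         (\<Sum>f\<in>?S. 1 - Ind m j f - Ind m k f + Ind m j f * Ind m k f)"
        by (rule sum.cong) (auto simp: algebra_simps)
      also have "\<dots> = nu - e1v m N - e1v m N + (if j = k then e1v m N else d11v m N)"
        using jk N3 nu by (simp add: sum.distrib sum_subtractf sum_Ind sum_Ind2)
      finally show "(\<Sum>f\<in>?S. (1 - Ind m j f) * (1 - Ind m k f)) = nu - 2 * e1v m N + (if j = k then e1v m N else d11v m N)"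
        by simp
    qed
    also have "\<dots> = (\<Sum>j<N. (nu - 2 * e1v m N + e1v m N) + (real N - 1) * (nu - 2 * e1v m N + d11v m N))"
    proof (rule sum.cong[OF refl])
      fix j assume "j \<in> {..<N}"
      have "(\<Sum>k<N. nu - 2 * e1v m N + (if j = k then e1v m N else d11v m N)) =
            (\<Sum>k<N. if j = k then nu - 2 * e1v m N + e1v m N else nu - 2 * e1v m N + d11v m N)"
        by (rule sum.cong) auto
      also have "\<dots> = (nu - 2 * e1v m N + e1v m N) + (real N - 1) * (nu - 2 * e1v m N + d11v m N)"
        using \<open>j \<in> {..<N}\<close> by (simp add: sum_if_eq)
      finally show "(\<Sum>k<N. nu - 2 * e1v m N + (if j = k then e1v m N else d11v m N)) =
            (nu - 2 * e1v m N + e1v m N) + (real N - 1) * (nu - 2 * e1v m N + d11v m N)" .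
    qed
    also have "\<dots> = (real N)^2 * (nu - 2 * e1v m N) + real N * e1v m N + real N * (real N - 1) * d11v m N"
      by (simp add: algebra_simps power2_eq_square)
    finally show ?thesis .
  qed
  have "measure_pmf.variance (balls_bins m N) ?Z =
      measure_pmf.expectation (balls_bins m N) (\<lambda>f. (?Z f)^2) - (measure_pmf.expectation (balls_bins m N) ?Z)^2"
    by (rule measure_pmf.variance_eq) (rule int)+
  also have "\<dots> = ((real N)^2 * (nu - 2 * e1v m N) + real N * e1v m N + real N * (real N - 1) * d11v m N) / nu
       - (real N * (nu - e1v m N) / nu)^2"
    by (simp only: expt s1 s2)
  also have "\<dots> = real N * (e1v m N / nu) + real N * (real N - 1) * (d11v m N / nu)
    - (real N)^2 * (e1v m N / nu)^2"
    using nupos by (simp add: field_simps power2_eq_square)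
  finally show ?thesis by (simp add: nu_def)
qed



lemma u_bound:
  fixes n :: real and m :: nat
  assumes n2: "n \<ge> 2"
  shows "0 \<le> exp (- (real m / n)) - (1 - 1/n)^m \<and> exp (- (real m / n)) - (1 - 1/n)^m \<le> 2 * real m / n^2"
proof -
  have pos: "0 < 1 - 1/n" using n2 by simp
  have u: "(1 - 1/n)^m = exp (real m * ln (1 - 1/n))"
    using pos by (simp add: ln_realpow[symmetric])
  have up: "ln (1 - 1/n) \<le> - (1/n)" by (rule ln_one_minus_pos_upper_bound) (use n2 in auto)
  have lo: "- (1/n) - 2 * (1/n)^2 \<le> ln (1 - 1/n)" by (rule ln_one_minus_pos_lower_bound) (use n2 in auto)
  have "real m * ln (1 - 1/n) \<le> real m * (- (1/n))" using up by (rule mult_left_mono) simp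
  then have u1: "(1 - 1/n)^m \<le> exp (- (real m / n))" unfolding u by simp
  have "real m * (- (1/n) - 2 * (1/n)^2) \<le> real m * ln (1 - 1/n)" using lo by (rule mult_left_mono) simp
  then have "exp (- (real m / n) - 2 * real m / n^2) \<le> (1 - 1/n)^m" unfolding u
    by (simp add: algebra_simps power2_eq_square)
  then have u2: "exp (- (real m / n)) * exp (- (2 * real m / n^2)) \<le> (1 - 1/n)^m"
    by (simp add: exp_add[symmetric])
  have e: "1 - exp (- (2 * real m / n^2)) \<le> 2 * real m / n^2"
    using exp_ge_add_one_self[of "- (2 * real m / n^2)"] by simp
  have e0: "0 \<le> 1 - exp (- (2 * real m / n^2))" by simp
  have "exp (- (real m / n)) - (1 - 1/n)^m \<le> exp (- (real m / n)) * (1 - exp (- (2 * real m / n^2)))"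
    using u2 by (simp add: algebra_simps)
  also have "\<dots> \<le> 1 * (2 * real m / n^2)"
    by (rule mult_mono) (use e e0 n2 in auto)
  finally show ?thesis using u1 by simp
qed

lemma r_bound:
  fixes t :: real and m :: nat
  assumes "0 \<le> t" "t \<le> 1"
  shows "1 - real m * t \<le> (1 - t)^m \<and> (1 - t)^m \<le> 1 - real m * t + (real m * t)^2 / 2"
proof
  show "1 - real m * t \<le> (1 - t)^m"
    using Bernoulli_inequality[of "-t" m] assms by simp
  show "(1 - t)^m \<le> 1 - real m * t + (real m * t)^2 / 2"
  proof (induction m)
    case 0 then show ?case by simp
  next
    case (Suc m)
    have "(1 - t)^(Suc m) = (1 - t) * (1 - t)^m" by simp
    also have "\<dots> \<le> (1 - t) * (1 - real m * t + (real m * t)^2 / 2)"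
      by (rule mult_left_mono[OF Suc.IH]) (use assms in simp)
    also have "\<dots> \<le> 1 - real (Suc m) * t + (real (Suc m) * t)^2 / 2"
    proof -
      have "0 \<le> (real m)^2 * t^3 / 2 + t^2 / 2" using assms by simp
      then show ?thesis by (simp add: algebra_simps power2_eq_square power3_eq_cube)
    qed
    finally show ?case .
  qed
qed





lemma Yeq_lemma:
  fixes n x a b :: real
  assumes "a = n - 1" "b = n - 2" "a \<noteq> 0" "b \<noteq> 0" "n \<noteq> 0"
  shows "(1 + 2 * x / b + x * (x - 1) / b^2) - (1 + x / a)^2 - x * (1 / a^2) * (1 + 2 * x / b + x * (x - 1) / b^2) + (x/n)^3 / n
   = x * (2 * x - 1) / (a^2 * b^2) + x^3 * (2 - 3 * n) * (2 * n^2 - 3 * n + 2) / (n^4 * a^2 * b^2)"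
proof -
  have "(1 + 2 * x / b + x * (x - 1) / b^2) - (1 + x / a)^2 - x * (1 / a^2) * (1 + 2 * x / b + x * (x - 1) / b^2) + (x/n)^3 / n
   - (x * (2 * x - 1) / (a^2 * b^2) + x^3 * (2 - 3 * n) * (2 * n^2 - 3 * n + 2) / (n^4 * a^2 * b^2))
   = ((b^2 + 2 * x * b + x * (x - 1)) * a^2 * n^4 - (a + x)^2 * b^2 * n^4 - x * (b^2 + 2 * x * b + x * (x - 1)) * n^4
      + x^3 * a^2 * b^2 - x * (2 * x - 1) * n^4 - x^3 * (2 - 3 * n) * (2 * n^2 - 3 * n + 2)) / (n^4 * a^2 * b^2)"
    using assms(3-5) by (simp add: field_simps power2_eq_square power3_eq_cube power4_eq_xxxx)
  also have "(b^2 + 2 * x * b + x * (x - 1)) * a^2 * n^4 - (a + x)^2 * b^2 * n^4 - x * (b^2 + 2 * x * b + x * (x - 1)) * n^4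
      + x^3 * a^2 * b^2 - x * (2 * x - 1) * n^4 - x^3 * (2 - 3 * n) * (2 * n^2 - 3 * n + 2) = 0"
    unfolding assms(1,2) by algebra
  finally show ?thesis by simp
qed
lemma approx_var:
  fixes n :: real and m :: nat
  assumes n6: "n \<ge> 6" and mn: "real m \<le> n"
  shows "\<bar>n * ((1 - 1/n)^m * (1 + real m / (n - 1)))
         + n * (n - 1) * ((1 - 2/n)^m * (1 + 2 * real m / (n - 2) + real m * (real m - 1) / (n - 2)^2))
         - n^2 * ((1 - 1/n)^m * (1 + real m / (n - 1)))^2
         - hfun (real m / n) * n\<bar> \<le> 300"
proof -
  define x where "x = real m"
  define a where "a = n - 1"
  define b where "b = n - 2"
  define c where "c = x / n"
  define u where "u = (1 - 1/n)^m"
  define w0 where "w0 = exp (- c)"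
  define t where "t = 1 / a^2"
  define r where "r = (1 - t)^m"
  define v where "v = (1 - 2/n)^m"
  define A where "A = 1 + 2 * x / b + x * (x - 1) / b^2"
  define B where "B = 1 + x / a"
  define w where "w = (1 + c) * w0"
  define X where "X = r * A - B^2"
  define du where "du = w0 - u"
  define dr where "dr = r - 1 + x * t"
  define Y where "Y = A - B^2 - x * t * A + c^3 / n"
  have x0: "0 \<le> x" and xn: "x \<le> n" using mn by (auto simp: x_def)
  have xx: "0 \<le> x * (x - 1)" unfolding x_def by (cases m) auto
  have npos: "n > 0" using n6 by simp
  have a2: "a \<ge> n / 2" "a > 0" using n6 by (auto simp: a_def)
  have b2: "b \<ge> n / 2" "b > 0" using n6 by (auto simp: b_def)
  have c01: "0 \<le> c" "c \<le> 1" using x0 xn npos by (auto simp: c_def)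
  have w01: "0 < w0" "w0 \<le> 1" using c01 by (auto simp: w0_def)
  have du: "0 \<le> du" "du \<le> 2 / n"
  proof -
    have "0 \<le> du \<and> du \<le> 2 * x / n^2"
      using u_bound[of n m] n6 by (simp add: du_def w0_def u_def c_def x_def)
    moreover have "2 * x / n^2 \<le> 2 / n" using xn npos by (simp add: field_simps power2_eq_square)
    ultimately show "0 \<le> du" "du \<le> 2 / n" by auto
  qed
  have u01: "0 \<le> u" "u \<le> 1" using n6 by (auto simp: u_def intro!: power_le_one)
  have B3: "1 \<le> B" "B \<le> 3"
  proof -
    have "x / a \<le> 2" using xn a2 by (simp add: field_simps)
    then show "1 \<le> B" "B \<le> 3" using x0 a2 by (auto simp: B_def)
  qed
  have A9: "0 \<le> A" "A \<le> 9"
  proof -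
    have 1: "x / b \<le> 2" "0 \<le> x / b" using xn b2 x0 by (auto simp: field_simps)
    have "x * (x - 1) \<le> x^2" using x0 by (simp add: power2_eq_square algebra_simps)
    then have "x * (x - 1) / b^2 \<le> x^2 / b^2" by (rule divide_right_mono) simp
    then have "x * (x - 1) / b^2 \<le> (x / b)^2" by (simp add: power_divide)
    also have "\<dots> \<le> 2^2" using 1 by (intro power_mono) auto
    finally have 2: "x * (x - 1) / b^2 \<le> 4" by simp
    have 3: "0 \<le> x * (x - 1) / b^2" using xx by simp
    show "0 \<le> A" "A \<le> 9" unfolding A_def using 1 2 3 by auto
  qed
  have stepA: "\<bar>u * B - w\<bar> \<le> 8 / n"
  proof -
    have eq0: "u * B - w = w0 * (x / a - x / n) - du * B"
      using a2 npos by (simp add: B_def w_def c_def du_def field_simps)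
    have "x / a - x / n = x * (n - a) / (a * n)" using a2 npos by (simp add: field_simps)
    also have "n - a = 1" by (simp add: a_def)
    finally have eq: "u * B - w = w0 * (x / (a * n)) - du * B" using eq0 by simp
    have p1: "0 \<le> w0 * (x / (a * n))" using w01 x0 a2 npos by simp
    have "x / (a * n) \<le> 2 / n" using xn a2 npos by (simp add: field_simps)
    then have p2: "w0 * (x / (a * n)) \<le> 2 / n"
      using w01 mult_mono[of w0 1 "x / (a * n)" "2 / n"] x0 a2 npos by simp
    have q1: "0 \<le> du * B" using du B3 by simp
    have q2: "du * B \<le> (2 / n) * 3" using du B3 npos by (intro mult_mono) auto
    show ?thesis unfolding eq using p1 p2 q1 q2 by (simp add: abs_le_iff)
  qed
  have stepB: "\<bar>(u * B)^2 - w^2\<bar> \<le> 40 / n"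
  proof -
    have "(u * B)^2 - w^2 = (u * B - w) * (u * B + w)" by (simp add: algebra_simps power2_eq_square)
    then have "\<bar>(u * B)^2 - w^2\<bar> = \<bar>u * B - w\<bar> * \<bar>u * B + w\<bar>" by (simp add: abs_mult)
    also have "\<dots> \<le> (8 / n) * 5"
    proof (rule mult_mono[OF stepA])
      have "u * B \<le> 1 * 3" using u01 B3 by (intro mult_mono) auto
      moreover have "w \<le> 2 * 1" unfolding w_def using c01 w01 by (intro mult_mono) auto
      moreover have "0 \<le> u * B" "0 \<le> w" using u01 B3 c01 w01 by (auto simp: w_def)
      ultimately show "\<bar>u * B + w\<bar> \<le> 5" by simp
    qed (use npos in auto)
    finally show ?thesis by simp
  qed
  have xt: "0 \<le> x * t" "x * t \<le> 4 / n"
  proof -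
    have "x * t = x / a^2" by (simp add: t_def)
    also have "\<dots> \<le> n / (n / 2)^2"
      using xn x0 a2 npos by (intro frac_le) (auto intro: power_mono)
    also have "\<dots> = 4 / n" using npos by (simp add: field_simps power2_eq_square)
    finally show "x * t \<le> 4 / n" .
    show "0 \<le> x * t" using x0 by (simp add: t_def)
  qed
  have dr: "\<bar>dr\<bar> \<le> 8 / n^2"
  proof -
    have t01: "0 \<le> t" "t \<le> 1"
    proof -
      have "1 \<le> a^2" using a2 n6 by (simp add: a_def power2_eq_square) (smt (verit) mult_le_cancel_left1)
      then show "0 \<le> t" "t \<le> 1" by (auto simp: t_def divide_le_eq_1)
    qed
    have "0 \<le> dr \<and> dr \<le> (x * t)^2 / 2"
      using r_bound[OF t01, of m] by (simp add: dr_def r_def x_def)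
    moreover have "(x * t)^2 \<le> (4 / n)^2" using xt by (intro power_mono) auto
    ultimately show ?thesis by (simp add: power_divide)
  qed
  have Yeq: "Y = x * (2 * x - 1) / (a^2 * b^2) + x^3 * (2 - 3 * n) * (2 * n^2 - 3 * n + 2) / (n^4 * a^2 * b^2)"
    unfolding Y_def A_def B_def t_def c_def
    by (rule Yeq_lemma) (use a2 b2 npos in \<open>auto simp: a_def b_def\<close>)
  have Ybound: "\<bar>Y\<bar> \<le> 128 / n^2"
  proof -
    define Q where "Q = n^4 * a^2 * b^2"
    have Qpos: "Q > 0" using npos a2 b2 by (simp add: Q_def)
    have Qlow: "n^8 / 16 \<le> Q"
    proof -
      have "(n/2)^2 \<le> a^2" "(n/2)^2 \<le> b^2" using a2 b2 npos by (auto intro: power_mono)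
      then have "(n/2)^2 * (n/2)^2 \<le> a^2 * b^2" by (intro mult_mono) auto
      then have "n^4 * ((n/2)^2 * (n/2)^2) \<le> n^4 * (a^2 * b^2)" using npos by (intro mult_left_mono) auto
      then show ?thesis by (simp add: Q_def power2_eq_square field_simps) (simp add: power_def)
    qed
    define p where "p = n^4 * (x * (2 * x - 1)) + x^3 * (2 - 3 * n) * (2 * n^2 - 3 * n + 2)"
    have YQ: "Y * Q = p" unfolding Yeq p_def Q_def using a2 b2 npos
      by (simp add: field_simps power2_eq_square)
    have pb: "\<bar>p\<bar> \<le> 8 * n^6"
    proof -
      have h1: "\<bar>x * (2 * x - 1)\<bar> \<le> n * (2 * n)"
        unfolding abs_mult using x0 xn n6 by (intro mult_mono) auto
      have h2: "\<bar>x^3\<bar> \<le> n^3" using x0 xn by (simp add: power_mono)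
      have h3: "\<bar>2 - 3 * n\<bar> \<le> 3 * n" using n6 by simp
      have h4: "\<bar>2 * n^2 - 3 * n + 2\<bar> \<le> 2 * n^2"
      proof -
        have "0 \<le> 2 * n^2 - 3 * n + 2" using n6 by (simp add: power2_eq_square)
        then show ?thesis using n6 by simp
      qed
      have "\<bar>x^3 * (2 - 3 * n) * (2 * n^2 - 3 * n + 2)\<bar> \<le> n^3 * (3 * n) * (2 * n^2)"
        unfolding abs_mult using h2 h3 h4 by (intro mult_mono) auto
      moreover have "\<bar>n^4 * (x * (2 * x - 1))\<bar> \<le> n^4 * (n * (2 * n))"
      proof -
        have "\<bar>n^4 * (x * (2 * x - 1))\<bar> = n^4 * \<bar>x * (2 * x - 1)\<bar>" using npos by (simp add: abs_mult)
        also have "\<dots> \<le> n^4 * (n * (2 * n))" using h1 npos by (intro mult_left_mono) auto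
        finally show ?thesis .
      qed
      ultimately have "\<bar>p\<bar> \<le> n^4 * (n * (2 * n)) + n^3 * (3 * n) * (2 * n^2)"
        unfolding p_def by (smt (verit))
      also have "\<dots> = 8 * n^6" by (simp add: power_def algebra_simps numeral_eq_Suc)
      finally show ?thesis .
    qed
    have "\<bar>Y\<bar> * (n^8 / 16) \<le> \<bar>Y\<bar> * Q" using Qlow by (intro mult_left_mono) auto
    also have "\<dots> = \<bar>p\<bar>" using YQ Qpos by (metis abs_mult abs_of_pos)
    also have "\<dots> \<le> 8 * n^6" by (rule pb)
    finally have "\<bar>Y\<bar> * (n^8 / 16) \<le> 8 * n^6" .
    then show ?thesis using npos by (simp add: field_simps power_def numeral_eq_Suc)
  qed
  have stepD: "\<bar>X + c^3 / n\<bar> \<le> 200 / n^2"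
  proof -
    have eq: "X + c^3 / n = dr * A + Y" by (simp add: X_def dr_def Y_def algebra_simps)
    have "\<bar>dr * A\<bar> \<le> (8 / n^2) * 9" unfolding abs_mult using dr A9 by (intro mult_mono) auto
    then show ?thesis unfolding eq using Ybound by (simp add: abs_le_iff)
  qed
  have stepD': "\<bar>n * (n - 1) * u^2 * (X + c^3 / n)\<bar> \<le> 200"
  proof -
    have "\<bar>n * (n - 1) * u^2 * (X + c^3 / n)\<bar> = (n * (n - 1) * u^2) * \<bar>X + c^3 / n\<bar>"
      using n6 by (simp add: abs_mult)
    also have "\<dots> \<le> n^2 * (200 / n^2)"
    proof (rule mult_mono[OF _ stepD])
      have "u^2 \<le> 1" using u01 by (simp add: power_le_one)
      then have "n * (n - 1) * u^2 \<le> n * (n - 1) * 1" using n6 by (intro mult_left_mono) auto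
      moreover have "n * (n - 1) \<le> n^2" using npos by (simp add: power2_eq_square right_diff_distrib)
      ultimately show "n * (n - 1) * u^2 \<le> n^2" by simp
    qed auto
    also have "\<dots> = 200" using npos by simp
    finally show ?thesis .
  qed
  have stepE: "\<bar>c^3 * (n * (w0^2 - u^2) + u^2)\<bar> \<le> 5"
  proof -
    define q where "q = du * (w0 + u)"
    have eqq: "w0^2 - u^2 = q" by (simp add: q_def du_def algebra_simps power2_eq_square)
    have q4: "q \<le> (2 / n) * 2" unfolding q_def using du w01 u01 npos by (intro mult_mono) auto
    have q0: "0 \<le> q" unfolding q_def using du w01 u01 by simp
    have "n * q \<le> n * ((2 / n) * 2)" using q4 npos by (intro mult_left_mono) auto
    also have "\<dots> = 4" using npos by simp
    finally have 1: "0 \<le> n * (w0^2 - u^2)" "n * (w0^2 - u^2) \<le> 4"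
      using q0 npos unfolding eqq by auto
    have 2: "0 \<le> u^2" "u^2 \<le> 1" using u01 by (auto simp: power_le_one)
    have 3: "0 \<le> c^3" "c^3 \<le> 1" using c01 by (auto simp: power_le_one)
    have "\<bar>c^3 * (n * (w0^2 - u^2) + u^2)\<bar> = c^3 * (n * (w0^2 - u^2) + u^2)"
      using 1 2 3 by simp
    also have "\<dots> \<le> 1 * 5" using 1 2 3 by (intro mult_mono) auto
    finally show ?thesis by simp
  qed
  have v: "v = u^2 * r"
  proof -
    have e1: "1 - 1/n = a/n" using npos by (simp add: a_def field_simps)
    have "(a/n)^2 * (1 - 1/a^2) = (a^2 - 1)/n^2" using a2 npos by (simp add: field_simps power2_eq_square)
    also have "a^2 - 1 = n^2 - 2 * n" by (simp add: a_def power2_eq_square algebra_simps)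
    also have "(n^2 - 2 * n)/n^2 = 1 - 2/n" using npos by (simp add: field_simps power2_eq_square)
    finally have "1 - 2/n = (1 - 1/n)^2 * (1 - t)" unfolding e1 t_def by simp
    then show ?thesis by (simp add: v_def u_def r_def power_mult_distrib power_mult[symmetric] mult.commute)
  qed
  have h: "hfun c = (1 + c) * w0 - ((1 + c)^2 + c^3) * w0^2"
    unfolding hfun_def w0_def by (simp add: power2_eq_square exp_add[symmetric])
  have main: "n * (u * B) + n * (n - 1) * (v * A) - n^2 * (u * B)^2 - hfun c * n =
     n * (u * B - w) - n * ((u * B)^2 - w^2) + n * (n - 1) * u^2 * (X + c^3 / n) + c^3 * (n * (w0^2 - u^2) + u^2)"
    unfolding h v X_def w_def using npos by (simp add: field_simps power2_eq_square power3_eq_cube)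
  have "\<bar>n * (u * B) + n * (n - 1) * (v * A) - n^2 * (u * B)^2 - hfun c * n\<bar> \<le> 8 + 40 + 200 + 5"
  proof -
    have "\<bar>n * (u * B - w)\<bar> = n * \<bar>u * B - w\<bar>" using npos by (simp add: abs_mult)
    also have "\<dots> \<le> n * (8 / n)" using stepA npos by (intro mult_left_mono) auto
    also have "\<dots> = 8" using npos by simp
    finally have "\<bar>n * (u * B - w)\<bar> \<le> 8" .
    moreover have "\<bar>n * ((u * B)^2 - w^2)\<bar> \<le> 40"
    proof -
      have "\<bar>n * ((u * B)^2 - w^2)\<bar> = n * \<bar>(u * B)^2 - w^2\<bar>" using npos by (simp add: abs_mult)
      also have "\<dots> \<le> n * (40 / n)" using stepB npos by (intro mult_left_mono) auto
      also have "\<dots> = 40" using npos by simp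
      finally show ?thesis .
    qed
    ultimately show ?thesis unfolding main using stepD' stepE by (simp add: abs_le_iff)
  qed
  then show ?thesis by (simp add: u_def B_def v_def A_def x_def a_def b_def c_def)
qed


lemma h_lower:
  fixes c :: real
  assumes c0: "0 \<le> c" and c1: "c \<le> 1/100"
  shows "13/30 * c^2 \<le> hfun c"
proof -
  define y where "y = exp c"
  have ypos: "y > 0" by (simp add: y_def)
  have y1: "1 + c + c^2/2 \<le> y" unfolding y_def by (rule exp_lower_Taylor_quadratic[OF c0])
  have y2: "y \<le> 1 + 2 * c" unfolding y_def by (rule real_exp_bound_lemma) (use c0 c1 in auto)
  have hy: "hfun c * y^2 = (1 + c) * y - ((1 + c)^2 + c^3)"
  proof -
    have e1: "exp (- c) = inverse y" by (simp add: y_def exp_minus)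
    have e2: "exp (- 2 * c) = inverse (y^2)"
      by (simp add: y_def power2_eq_square exp_add[symmetric] exp_minus[symmetric])
    show ?thesis unfolding hfun_def e1 e2 using ypos by (simp add: field_simps power2_eq_square)
  qed
  have A: "(1 + c) * (1 + c + c^2/2) \<le> (1 + c) * y" using y1 c0 by (intro mult_left_mono) auto
  have c3: "c^3 \<le> c^2 / 100"
  proof -
    have "c^3 = c * c^2" by (simp add: power2_eq_square power3_eq_cube)
    also have "\<dots> \<le> (1/100) * c^2" using c1 by (intro mult_right_mono) auto
    finally show ?thesis by simp
  qed
  have B: "99/200 * c^2 \<le> (1 + c) * y - ((1 + c)^2 + c^3)"
  proof -
    have e1: "(1 + c) * (1 + c + c^2/2) = 1 + 2*c + 3/2*c^2 + 1/2*c^3"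
      by (simp add: field_simps power2_eq_square power3_eq_cube)
    have e2: "(1 + c)^2 = 1 + 2*c + c^2" by (simp add: power2_eq_square algebra_simps)
    show ?thesis using A c3 e1 e2 by linarith
  qed
  have C: "y^2 \<le> (51/50)^2" using y2 c1 ypos by (intro power_mono) auto
  have D: "13/30 * c^2 * y^2 \<le> 13/30 * c^2 * (51/50)^2" using C by (intro mult_left_mono) auto
  have F: "(51/50::real)^2 = 2601/2500" by (simp add: power2_eq_square)
  have G: "0 \<le> c^2" by simp
  have "13/30 * c^2 * y^2 \<le> hfun c * y^2" unfolding hy using B D F G by (simp only: F)
  then show ?thesis using ypos by simp
qed

lemma var_bound:
  assumes N6: "6 \<le> N" and mN: "real m \<le> real N"
  shows "\<bar>measure_pmf.variance (balls_bins m N) (bins_ge2 m N) - hfun (real m / real N) * real N\<bar> \<le> 300"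
proof -
  define n where "n = real N"
  have npos: "n > 0" using N6 by (simp add: n_def)
  have q1: "e1v m N / real N ^ m = (1 - 1/n)^m * (1 + real m / (n - 1))"
  proof -
    have "(n - 1)^m / n^m = (1 - 1/n)^m" using npos by (simp add: power_divide[symmetric] diff_divide_distrib)
    moreover have "e1v m N / real N ^ m = ((real N - 1)^m / real N^m) * (1 + real m / (real N - 1))"
      unfolding e1v_def by (rule times_divide_eq_left[symmetric])
    ultimately show ?thesis unfolding n_def by simp
  qed
  have q2: "d11v m N / real N ^ m = (1 - 2/n)^m * (1 + 2 * real m / (n - 2) + real m * (real m - 1) / (n - 2)^2)"
  proof -
    have "(n - 2)^m / n^m = (1 - 2/n)^m" using npos by (simp add: power_divide[symmetric] diff_divide_distrib)
    moreover have "d11v m N / real N ^ m = ((real N - 2)^m / real N^m) * (1 + 2 * real m / (real N - 2) + real m * (real m - 1) / (real N - 2)^2)"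
      unfolding d11v_def by (rule times_divide_eq_left[symmetric])
    ultimately show ?thesis unfolding n_def by simp
  qed
  have "measure_pmf.variance (balls_bins m N) (bins_ge2 m N) =
      n * ((1 - 1/n)^m * (1 + real m / (n - 1)))
         + n * (n - 1) * ((1 - 2/n)^m * (1 + 2 * real m / (n - 2) + real m * (real m - 1) / (n - 2)^2))
         - n^2 * ((1 - 1/n)^m * (1 + real m / (n - 1)))^2"
    using var_exact[of N m] N6 unfolding q1 q2 n_def by simp
  then show ?thesis using approx_var[of n m] N6 mN by (simp add: n_def)
qed

theorem lemma6p3:
  fixes m :: "nat \<Rightarrow> nat"
  assumes "(\<lambda>N. real (m N)) \<in> \<Theta>(\<lambda>N. real N)"
    and "\<forall>\<^sub>F N in at_top. 0 < m N \<and> real (m N) / real N < 1 / 100"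
  shows "(\<lambda>N. measure_pmf.variance (balls_bins (m N) N) (bins_ge2 (m N) N)
              - hfun (real (m N) / real N) * real N) \<in> O(\<lambda>_. 1)
       \<and> (\<forall>\<^sub>F N in at_top. measure_pmf.variance (balls_bins (m N) N) (bins_ge2 (m N) N)
              \<ge> 1 / 3 * (real (m N) / real N)^2 * real N)"
proof -
  define V where "V N = measure_pmf.variance (balls_bins (m N) N) (bins_ge2 (m N) N)" for N
  have ev: "\<forall>\<^sub>F N in at_top. 6 \<le> N \<and> 0 < m N \<and> real (m N) / real N < 1 / 100"
    using assms(2) eventually_ge_at_top[of "6::nat"] by eventually_elim auto
  have bnd: "\<forall>\<^sub>F N in at_top. \<bar>V N - hfun (real (m N) / real N) * real N\<bar> \<le> 300
       \<and> real (m N) / real N \<le> 1/100"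
    using ev
  proof eventually_elim
    case (elim N)
    have Np: "0 < real N" using elim by simp
    have "real (m N) < 1/100 * real N" using elim Np by (simp add: divide_less_eq)
    then have "real (m N) \<le> real N" using Np by linarith
    then show ?case using var_bound[of N "m N"] elim unfolding V_def by auto
  qed
  have part1: "(\<lambda>N. V N - hfun (real (m N) / real N) * real N) \<in> O(\<lambda>_. 1)"
    by (rule landau_o.bigI[of 300]) (use bnd in \<open>auto elim: eventually_mono\<close>)
  from assms(1) have "(\<lambda>N. real (m N)) \<in> \<Omega>(\<lambda>N. real N)" by (simp add: bigtheta_def)
  then obtain d where d: "d > 0" "\<forall>\<^sub>F N in at_top. norm (real (m N)) \<ge> d * norm (real N)"
    by (elim landau_omega.bigE)
  have part2: "\<forall>\<^sub>F N in at_top. V N \<ge> 1 / 3 * (real (m N) / real N)^2 * real N"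
    using bnd d(2) ev eventually_ge_at_top[of "nat \<lceil>3000 / d^2\<rceil>"]
  proof eventually_elim
    case (elim N)
    define c where "c = real (m N) / real N"
    have Npos: "real N > 0" using elim by simp
    have c0: "0 \<le> c" "c \<le> 1/100" using elim by (auto simp: c_def)
    have cd: "d \<le> c" using elim Npos by (simp add: c_def field_simps)
    have NN: "3000 / d^2 \<le> real N" using elim(4) by linarith
    have "3000 \<le> d^2 * real N" using NN d(1) by (simp add: field_simps)
    also have "\<dots> \<le> c^2 * real N" using cd d(1) Npos by (intro mult_right_mono power_mono) auto
    finally have big: "3000 \<le> c^2 * real N" .
    have "13/30 * c^2 * real N \<le> hfun c * real N" using h_lower[OF c0] Npos by (intro mult_right_mono) auto
    moreover have "hfun c * real N - 300 \<le> V N" using elim(1) unfolding c_def by (simp add: abs_le_iff)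
    ultimately show ?case using big unfolding c_def[symmetric] by (simp add: algebra_simps)
  qed
  show ?thesis using part1 part2 unfolding V_def by blast
qed

end
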